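(* Let $q$ be a prime power, $m$ a positive integer, and $n=q^m-1$. Then every $q$-ary cyclotomic coset $C_x=\{xq^\ell\bmod n\mid \ell\in\mathbf{Z}\}$ with $1\le x<q^{\lceil m/2\rceil}+1$ has cardinality $|C_x|=m$. *)

theory Defs
  imports Complex_Main "HOL-Number_Theory.Number_Theory"
begin

text \<open>Exponents range over the naturals; since gcd(q,n)=1 for n = q^m - 1 the sequence
  q^l mod n is purely periodic, so this is the same set as for l ranging over the integers.\<close>
definition cyclotomic_coset :: "nat \<Rightarrow> nat \<Rightarrow> nat \<Rightarrow> nat set" where
  "cyclotomic_coset q n x = {(x * q ^ l) mod n | l. True}"

end

theory Submission
  imports Defs
begin

lemma cong_pow_mult:
  fixes x q d n :: nat
  assumes "[x*q^d = x] (mod n)"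
  shows "[x*q^(k*d) = x] (mod n)"
proof (induction k)
  case 0 then show ?case by simp
next
  case (Suc k)
  have "x*q^(Suc k*d) = (x*q^(k*d))*q^d" by (simp add: power_add algebra_simps)
  also have "[(x*q^(k*d))*q^d = x*q^d] (mod n)" using Suc cong_mult cong_refl by blast
  finally show ?case using assms cong_trans by blast
qed

lemma dvd_of_least:
  fixes x q d n m :: nat
  assumes "[x*q^d = x] (mod n)" "[x*q^m = x] (mod n)" "0 < d"
    and minim: "\<And>e. 0 < e \<Longrightarrow> e < d \<Longrightarrow> \<not> [x*q^e = x] (mod n)"
  shows "d dvd m"
proof -
  define k r where "k = m div d" and "r = m mod d"
  have m: "m = k*d + r" unfolding k_def r_def by simp
  have r: "r < d" unfolding r_def using assms(3) by simp
  have "x*q^m = (x*q^(k*d))*q^r" using m by (simp add: power_add algebra_simps)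
  also have "[\<dots> = x*q^r] (mod n)" using cong_pow_mult[OF assms(1)] cong_mult cong_refl by blast
  finally have "[x*q^r = x*q^m] (mod n)" by (rule cong_sym)
  then have "[x*q^r = x] (mod n)" using assms(2) cong_trans by blast
  then have "r = 0" using minim r by blast
  then show ?thesis unfolding r_def by auto
qed

lemma no_small_period:
  fixes x q d n m :: nat
  assumes "[x*q^d = x] (mod n)" "d dvd m" "0 < d" "d < m" "n = q^m - 1" "q \<ge> 2"
    "1 \<le> x" "x < q ^ nat \<lceil>real m / 2\<rceil> + 1"
  shows False
proof -
  define c where "c = nat \<lceil>real m / 2\<rceil>"
  obtain k where k: "m = d*k" using assms(2) by auto
  have "k \<ge> 2" using k assms(3,4) by (cases k; cases "k - 1"; auto)
  then have "2*d \<le> m" using k by (metis mult.commute mult_le_mono2)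
  then have "real m / 2 \<le> real (m - d)" by simp
  then have cle: "c \<le> m - d" unfolding c_def by (simp add: ceiling_le_iff nat_le_iff)
  have "(1::int) \<le> \<lceil>real m / 2\<rceil>" using assms(3,4) by (simp add: le_ceiling_iff)
  then have "c \<ge> 1" unfolding c_def by linarith
  have xc: "x \<le> q^c" using assms(8) c_def by simp
  have qc: "q^c \<ge> 2" using \<open>c \<ge> 1\<close> assms(6)
    by (metis power_increasing power_one_right order_trans less_le_trans not_le one_le_numeral zero_less_numeral)
  have qd: "q^d \<ge> 1" using assms(6) by simp
  have "x \<le> x*q^d" using qd by simp
  then have "n dvd x*q^d - x" using assms(1) cong_altdef_nat by (metis cong_sym)
  moreover have "x*q^d - x > 0"
  proof -
    have "q^d > 1" using assms(3,6) by (metis less_le_trans one_less_numeral_iff semiring_norm(76) one_less_power)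
    then show ?thesis using assms(7) by simp
  qed
  ultimately have "n \<le> x*q^d - x" by (simp add: dvd_imp_le)
  also have "\<dots> = x*(q^d - 1)" by (simp add: diff_mult_distrib2)
  also have "\<dots> \<le> q^c*(q^d - 1)" using xc by simp
  also have "\<dots> = q^(c+d) - q^c" by (simp add: diff_mult_distrib2 power_add)
  also have "\<dots> \<le> q^m - q^c"
  proof -
    have "q^(c+d) \<le> q^m" using cle assms(4,6) by (intro power_increasing) auto
    then show ?thesis by simp
  qed
  finally have "q^m - 1 \<le> q^m - q^c" using assms(5) by simp
  moreover have "q^c \<le> q^m" using cle assms(6) by (intro power_increasing) auto
  ultimately show False using qc by linarith
qed

theorem mainTheorem4:
  fixes q m n x :: nat
  assumes "primepow q"
    and "m > 0"
    and "n = q ^ m - 1"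
    and "1 \<le> x"
    and "x < q ^ nat \<lceil>real m / 2\<rceil> + 1"
  shows "card (cyclotomic_coset q n x) = m"
proof -
  have q2: "q \<ge> 2" using primepow_gt_Suc_0[OF assms(1)] by simp
  have qm: "q^m \<ge> 1" using q2 by simp
  have qm1: "[q^m = 1] (mod n)" using assms(3) qm unfolding cong_def
    by (metis Suc_diff_le diff_Suc_1 mod_Suc_eq mod_self plus_1_eq_Suc add.commute
        add_0 mod_add_self2 le_add_diff_inverse2)
  have qmk: "[q^(m*k) = 1] (mod n)" for k
    using cong_pow[OF qm1, of k] by (simp add: power_mult)
  define f where "f l = x*q^l mod n" for l
  have per: "f l = f (l mod m)" for l
  proof -
    have "x*q^l = (x*q^(l mod m))*q^(m*(l div m))"
      by (metis mult.assoc power_add mult.commute div_mult_mod_eq)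
    also have "[\<dots> = (x*q^(l mod m))*1] (mod n)" using qmk cong_mult cong_refl by blast
    finally show ?thesis unfolding f_def cong_def by simp
  qed
  have coset: "cyclotomic_coset q n x = f ` {..<m}"
  proof
    show "cyclotomic_coset q n x \<subseteq> f ` {..<m}"
      unfolding cyclotomic_coset_def
    proof
      fix y assume "y \<in> {x * q ^ l mod n |l. True}"
      then obtain l where "y = f l" unfolding f_def by auto
      then have "y = f (l mod m)" using per by simp
      then show "y \<in> f ` {..<m}" using assms(2) by auto
    qed
    show "f ` {..<m} \<subseteq> cyclotomic_coset q n x"
      unfolding cyclotomic_coset_def f_def by auto
  qed
  have noper: "\<not> [x*q^d = x] (mod n)" if "0 < d" "d < m" for d
  proof
    assume h: "[x*q^d = x] (mod n)"
    define d0 where "d0 = (LEAST e. 0 < e \<and> [x*q^e = x] (mod n))"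
    have d0: "0 < d0 \<and> [x*q^d0 = x] (mod n)"
      unfolding d0_def by (rule LeastI[of _ d]) (use h that in auto)
    have "d0 \<le> d" unfolding d0_def by (rule Least_le) (use h that in auto)
    have minim: "\<not> [x*q^e = x] (mod n)" if "0 < e" "e < d0" for e
      using not_less_Least[of e "\<lambda>e. 0 < e \<and> [x*q^e = x] (mod n)"] that
      unfolding d0_def by auto
    have xm: "[x*q^m = x] (mod n)" using cong_mult[OF cong_refl qm1, of x] by simp
    have "d0 dvd m" using dvd_of_least[OF conjunct2[OF d0] xm conjunct1[OF d0] minim] by blast
    then show False using no_small_period[OF conjunct2[OF d0] _ conjunct1[OF d0] _ assms(3) q2 assms(4,5)]
      \<open>d0 \<le> d\<close> that by linarith
  qed
  have inj: "inj_on f {..<m}"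
  proof (rule ccontr)
    assume "\<not> inj_on f {..<m}"
    then obtain i j where ij: "i < m" "j < m" "i \<noteq> j" "f i = f j" unfolding inj_on_def by auto
    have "\<exists>i j. i < j \<and> j < m \<and> f i = f j"
      using ij by (metis linorder_neqE_nat)
    then obtain i j where ij: "i < j" "j < m" "f i = f j" by blast
    define d where "d = j - i"
    have "[x*q^i = x*q^j] (mod n)" using ij(3) unfolding f_def cong_def .
    then have "[x*q^i*q^((m-1)*i) = x*q^j*q^((m-1)*i)] (mod n)" using cong_mult cong_refl by blast
    moreover have "x*q^i*q^((m-1)*i) = x*q^(m*i)"
      using assms(2) by (simp add: mult.assoc power_add[symmetric]) (simp add: algebra_simps)
    moreover have "x*q^j*q^((m-1)*i) = x*q^d*q^(m*i)"
      using assms(2) ij(1) unfolding d_def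
      by (simp add: mult.assoc power_add[symmetric]) (simp add: algebra_simps)
    ultimately have "[x*q^(m*i) = x*q^d*q^(m*i)] (mod n)" by metis
    moreover have "[x*q^(m*i) = x*1] (mod n)" using qmk cong_mult cong_refl by blast
    moreover have "[x*q^d*q^(m*i) = x*q^d*1] (mod n)" using qmk cong_mult cong_refl by blast
    ultimately have "[x*q^d = x] (mod n)" by (metis cong_sym cong_trans mult_1_right)
    then show False using noper[of d] ij unfolding d_def by simp
  qed
  show ?thesis using coset inj card_image by fastforce
qed

end
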